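(* For integers $m\ge1$ let $f_m(x)=\frac{(m-x)^{m-1}}{e^{m-x}(m-1)!}$ for $x\le m$ and $f_m(x)=0$ for $x>m$, and for integers $m\ge2$ and real $z\ge0$ let $b(m,z)$ be the unique real number with $0\le b(m,z)\le z$ and $f_m(1-z)=f_m(1+z-b(m,z))$. There is an absolute constant $C>0$ such that the following holds. Suppose $n\ge100$ is an integer, $1\le w\le\frac n{10}$, $b=b(n+1,w)$ and $0\le\xi\le1$. (i) If $h$ is an integer with $w^{3/2}\le h\le n$, then $$|f_h(1+w-b-\xi)-f_h(1-w-\xi)|\le C\Big(\frac wh+\frac{w^3}{h^2}\Big)f_h(1-w).$$ (ii) If $2\sqrt n\le w\le \frac n{10}$ and $k$ is an integer with $1\le k\le n-3w$, then each of $f_{n+1-k}(1+w-b-\xi)$ and $f_{n+1-k}(1-w-\xi)$ is of the form $$f_{n+1}(1-w)\exp\Big\{\sum_{j=n-k}^{n}\Big(\frac1{2j}\Big(1-\frac{w^2}{j}\Big)+\theta_j\,C\frac{w^3}{j^3}\Big)+\theta\,C\frac wn\Big\}$$ for some real numbers $\theta_j$ ($n-k\le j\le n$) and $\theta$ with $|\theta_j|\le1$, $|\theta|\le1$.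
   Context: $f_m$ is the density of $X_1+\cdots+X_m$, where the $X_i$ are independent with density $e^{x-1}$ for $x\le 1$ and $0$ for $x>1$. *)

theory Defs
  imports Complex_Main
begin

text \<open>Density f_m of a sum of m i.i.d. variables with density e^(x-1) on x \<le> 1
  (meaningful for m \<ge> 1).\<close>
definition fdens :: "nat \<Rightarrow> real \<Rightarrow> real" where
  "fdens m x = (if x \<le> real m
      then (real m - x) ^ (m - 1) / (exp (real m - x) * fact (m - 1))
      else 0)"

definition bfun :: "nat \<Rightarrow> real \<Rightarrow> real" where
  "bfun m z = (THE y. 0 \<le> y \<and> y \<le> z \<and> fdens m (1 - z) = fdens m (1 + z - y))"

end

theory Submission
  imports Defs
begin


lemma mvt_bound:
  fixes g g' :: "real \<Rightarrow> real"
  assumes g0: "g 0 = 0"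
    and der: "\<And>t. \<bar>t\<bar> \<le> 1/2 \<Longrightarrow> DERIV g t :> g' t"
    and bd: "\<And>t. \<bar>t\<bar> \<le> 1/2 \<Longrightarrow> \<bar>g' t\<bar> \<le> M * \<bar>t\<bar> ^ k"
    and z: "\<bar>z\<bar> \<le> 1/2"
  shows "\<bar>g z\<bar> \<le> M * \<bar>z\<bar> ^ (Suc k)"
proof (cases "z = 0")
  case True then show ?thesis using g0 by simp
next
  case False
  have "0 \<le> M * \<bar>1/2::real\<bar> ^ k" using bd[of "1/2"] abs_ge_zero[of "g' (1/2)"] by linarith
  moreover have "(1/2::real)^k > 0" by simp
  ultimately have M0: "0 \<le> M" by (simp add: zero_le_mult_iff)
  show ?thesis
  proof (cases "0 < z")
    case True
    obtain c where c: "0 < c" "c < z" "g z - g 0 = (z - 0) * g' c"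
      using MVT2[of 0 z g g'] True der z by force
    have "\<bar>g z\<bar> = z * \<bar>g' c\<bar>" using c g0 True by (simp add: abs_mult)
    also have "\<dots> \<le> z * (M * \<bar>c\<bar> ^ k)" using bd[of c] c z True by (intro mult_left_mono) auto
    also have "\<dots> \<le> z * (M * \<bar>z\<bar> ^ k)" using c M0 True
      by (intro mult_left_mono power_mono) auto
    finally show ?thesis using True by (simp add: mult_ac)
  next
    case False
    with \<open>z \<noteq> 0\<close> have zn: "z < 0" by simp
    obtain c where c: "z < c" "c < 0" "g 0 - g z = (0 - z) * g' c"
      using MVT2[of z 0 g g'] zn der z by force
    have "\<bar>g z\<bar> = (-z) * \<bar>g' c\<bar>" using c g0 zn by (simp add: abs_mult)
    also have "\<dots> \<le> (-z) * (M * \<bar>c\<bar> ^ k)" using bd[of c] c z zn by (intro mult_left_mono) auto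
    also have "\<dots> \<le> (-z) * (M * \<bar>z\<bar> ^ k)" using c M0 zn
      by (intro mult_left_mono power_mono mult_left_mono) auto
    finally show ?thesis using zn by (simp add: mult_ac)
  qed
qed

lemma ln3:
  fixes z :: real assumes z: "\<bar>z\<bar> \<le> 1/2"
  shows "\<bar>ln (1 + z) - z + z^2/2\<bar> \<le> 2 * \<bar>z\<bar> ^ 3"
proof -
  have "\<bar>(\<lambda>t. ln (1 + t) - t + t^2/2) z\<bar> \<le> 2 * \<bar>z\<bar> ^ Suc 2"
  proof (rule mvt_bound[where g' = "\<lambda>t. t^2 / (1 + t)"])
    fix t :: real assume t: "\<bar>t\<bar> \<le> 1/2"
    hence tp: "1 + t > 0" by auto
    show "DERIV (\<lambda>t. ln (1 + t) - t + t^2/2) t :> t^2/(1+t)"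
      using tp by (auto intro!: derivative_eq_intros simp: field_simps power2_eq_square)
    have "\<bar>t^2/(1+t)\<bar> = t^2/(1+t)" using tp by simp
    also have "\<dots> \<le> t^2 / (1/2)" using t tp by (intro divide_left_mono) auto
    finally show "\<bar>t^2/(1+t)\<bar> \<le> 2 * \<bar>t\<bar>^2" by simp
  qed (use z in auto)
  thus ?thesis by simp
qed

lemma ln4:
  fixes z :: real assumes z: "\<bar>z\<bar> \<le> 1/2"
  shows "\<bar>ln (1 + z) - z + z^2/2 - z^3/3\<bar> \<le> 2 * \<bar>z\<bar> ^ 4"
proof -
  have "\<bar>(\<lambda>t. ln (1 + t) - t + t^2/2 - t^3/3) z\<bar> \<le> 2 * \<bar>z\<bar> ^ Suc 3"
  proof (rule mvt_bound[where g' = "\<lambda>t. 0 - t^3 / (1 + t)"])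
    fix t :: real assume t: "\<bar>t\<bar> \<le> 1/2"
    hence tp: "1 + t > 0" by auto
    show "DERIV (\<lambda>t. ln (1 + t) - t + t^2/2 - t^3/3) t :> 0 - t^3/(1+t)"
      using tp by (auto intro!: derivative_eq_intros simp: field_simps power2_eq_square power3_eq_cube)
    have "\<bar>0 - t^3/(1+t)\<bar> = \<bar>t\<bar>^3/(1+t)" using tp by (simp add: abs_mult power_abs)
    also have "\<dots> \<le> \<bar>t\<bar>^3 / (1/2)" using t tp by (intro divide_left_mono) auto
    finally show "\<bar>0 - t^3/(1+t)\<bar> \<le> 2 * \<bar>t\<bar>^3" by simp
  qed (use z in auto)
  thus ?thesis by simp
qed

lemma exp_m1_bound: "\<bar>exp (d::real) - 1\<bar> \<le> \<bar>d\<bar> * exp \<bar>d\<bar>"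
proof (cases "d \<ge> 0")
  case True
  have "exp (-d) \<ge> 1 - d" using exp_ge_add_one_self[of "-d"] by simp
  hence "exp (-d) * exp d \<ge> (1 - d) * exp d" by (intro mult_right_mono) auto
  hence "1 \<ge> (1 - d) * exp d" by (simp add: exp_minus field_simps)
  hence "exp d - 1 \<le> d * exp d" by (simp add: algebra_simps)
  moreover have "exp d \<ge> 1" using True by simp
  ultimately show ?thesis using True by simp
next
  case False
  have "1 + d \<le> exp d" by (rule exp_ge_add_one_self)
  moreover have "exp d \<le> 1" using False by simp
  moreover have "1 \<le> exp \<bar>d\<bar>" by simp
  moreover have "\<bar>exp d - 1\<bar> = 1 - exp d" using \<open>exp d \<le> 1\<close> by simp
  ultimately have "\<bar>exp d - 1\<bar> \<le> \<bar>d\<bar>" using False by linarith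
  also have "\<dots> \<le> \<bar>d\<bar> * exp \<bar>d\<bar>" using \<open>1 \<le> exp \<bar>d\<bar>\<close> by (simp add: mult_le_cancel_left1)
  finally show ?thesis .
qed

definition LL :: "nat \<Rightarrow> real \<Rightarrow> real" where
  "LL a x = real a * ln (real a + x) - (real a + x) - ln (fact a)"

lemma fdens_LL:
  assumes "real a + x > 0"
  shows "fdens (Suc a) (1 - x) = exp (LL a x)"
proof -
  have e: "real (Suc a) - (1 - x) = real a + x" by simp
  have "exp (LL a x) = exp (real a * ln (real a + x)) / exp (real a + x) / exp (ln (fact a))"
    unfolding LL_def by (simp add: exp_diff)
  also have "\<dots> = (real a + x) ^ a / (exp (real a + x) * fact a)"
    using assms by (simp add: exp_of_nat_mult)
  moreover have c: "1 - x \<le> real (Suc a)" using assms by simp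
  ultimately show ?thesis unfolding fdens_def by (simp only: if_True e diff_Suc_1)
qed



lemma R1_bound:
  fixes A x :: real assumes A: "A \<ge> 3" and x: "\<bar>x\<bar> \<le> A/3"
  shows "\<bar>x^2/((A+1)*(A+x)) - x^2/A^2\<bar> \<le> 2*\<bar>x\<bar>^3/A^3 + 3*\<bar>x\<bar>/A^2"
proof -
  have Ax: "A + x \<ge> 2*A/3" using x by auto
  have eq: "x^2/((A+1)*(A+x)) - x^2/A^2 = - (x^2 * (A*x + A + x)) / (A^2*((A+1)*(A+x)))"
  proof -
    have "A \<noteq> 0" "A + 1 \<noteq> 0" "A + x \<noteq> 0" using A Ax by auto
    hence "x^2/((A+1)*(A+x)) - x^2/A^2 = (x^2*A^2 - x^2*((A+1)*(A+x)))/(((A+1)*(A+x))*A^2)"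
      by (simp add: diff_frac_eq)
    also have "x^2*A^2 - x^2*((A+1)*(A+x)) = - (x^2 * (A*x + A + x))" by (simp add: algebra_simps power2_eq_square)
    also have "((A+1)*(A+x))*A^2 = A^2*((A+1)*(A+x))" by (rule mult.commute)
    finally show ?thesis .
  qed
  have n: "\<bar>x^2 * (A*x + A + x)\<bar> \<le> x^2 * (A*\<bar>x\<bar> + 2*A)"
  proof -
    have "\<bar>A*x\<bar> = A*\<bar>x\<bar>" using A by (simp add: abs_mult)
    hence "\<bar>A*x + A + x\<bar> \<le> A*\<bar>x\<bar> + 2*A" using A x by arith
    thus ?thesis by (simp add: abs_mult mult_left_mono)
  qed
  have d: "A^2*((A+1)*(A+x)) \<ge> A^2*(A*(2*A/3))"
    using A Ax by (intro mult_left_mono mult_mono) auto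
  have "\<bar>x^2/((A+1)*(A+x)) - x^2/A^2\<bar> = \<bar>x^2 * (A*x + A + x)\<bar> / (A^2*((A+1)*(A+x)))"
    unfolding eq using A Ax by (simp add: abs_divide abs_minus)
  also have "\<dots> \<le> x^2 * (A*\<bar>x\<bar> + 2*A) / (A^2*(A*(2*A/3)))"
    using n d A by (intro frac_le) auto
  also have "\<dots> = 1.5*\<bar>x\<bar>^3/A^3 + 3*x^2/A^3"
    using A by (simp add: field_simps power2_eq_square power3_eq_cube)
  also have "\<dots> \<le> 2*\<bar>x\<bar>^3/A^3 + 3*\<bar>x\<bar>/A^2"
  proof -
    have "x^2/A^3 \<le> \<bar>x\<bar>/A^2"
    proof -
      have "x^2/A^3 = \<bar>x\<bar>/A^2 * (\<bar>x\<bar>/A)" using A by (simp add: field_simps power2_eq_square power3_eq_cube)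
      also have "\<dots> \<le> \<bar>x\<bar>/A^2 * 1" using A x by (intro mult_left_mono) auto
      finally show ?thesis by simp
    qed
    moreover have "1.5*\<bar>x\<bar>^3/A^3 \<le> 2*\<bar>x\<bar>^3/A^3" using A by (intro divide_right_mono) auto
    ultimately show ?thesis by linarith
  qed
  finally show ?thesis .
qed

lemma R2_bound:
  fixes A x :: real assumes A: "A \<ge> 3" and x: "\<bar>x\<bar> \<le> A/3"
  shows "\<bar>x^2/(2*A^2) - (x/(A+1))^2/2\<bar> \<le> \<bar>x\<bar>/A^2"
proof -
  have eq: "x^2/(2*A^2) - (x/(A+1))^2/2 = x^2*(2*A+1)/(2*A^2*(A+1)^2)"
  proof -
    have "A \<noteq> 0" "A + 1 \<noteq> 0" using A by auto
    thus ?thesis by (simp add: field_simps; simp add: algebra_simps power2_eq_square)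
  qed
  have "x^2*(2*A+1)/(2*A^2*(A+1)^2) \<le> x^2*(3*A)/(2*A^2*A^2)"
    using A by (intro frac_le mult_left_mono mult_mono power_mono) auto
  also have "\<dots> = 1.5 * (\<bar>x\<bar>/A^2) * (\<bar>x\<bar>/A)" using A by (simp add: field_simps power2_eq_square)
  also have "\<dots> \<le> 1.5 * (\<bar>x\<bar>/A^2) * (1/3)" using A x by (intro mult_left_mono) auto
  also have "\<dots> \<le> \<bar>x\<bar>/A^2" using A by (simp add: field_simps)
  finally show ?thesis unfolding eq using A by simp
qed

lemma R3_bound:
  fixes A x :: real assumes A: "A \<ge> 3" and x: "\<bar>x\<bar> \<le> A/3"
  shows "\<bar>x/((A+1)*(A+x))\<bar> \<le> 1.5*\<bar>x\<bar>/A^2"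
proof -
  have Ax: "A + x \<ge> 2*A/3" using x by auto
  have "\<bar>x/((A+1)*(A+x))\<bar> = \<bar>x\<bar>/((A+1)*(A+x))" using A Ax by (simp add: abs_divide)
  also have "\<dots> \<le> \<bar>x\<bar>/(A*(2*A/3))" using A Ax by (intro divide_left_mono mult_mono) auto
  also have "\<dots> = 1.5*\<bar>x\<bar>/A^2" using A by (simp add: field_simps power2_eq_square)
  finally show ?thesis .
qed

lemma R4_bound:
  fixes A x :: real assumes A: "A \<ge> 3" and x: "\<bar>x\<bar> \<le> A/3"
  shows "\<bar>1/(2*A) - A*(1/(A+x))^2/2\<bar> \<le> 3*\<bar>x\<bar>/A^2"
proof -
  have Ax: "A + x \<ge> 2*A/3" using x by auto
  have eq: "1/(2*A) - A*(1/(A+x))^2/2 = (2*A*x + x^2)/(2*A*(A+x)^2)"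
  proof -
    have "A \<noteq> 0" "A + x \<noteq> 0" using A Ax by auto
    thus ?thesis by (simp add: field_simps; simp add: algebra_simps power2_eq_square)
  qed
  have n: "\<bar>2*A*x + x^2\<bar> \<le> 2*A*\<bar>x\<bar> + A*\<bar>x\<bar>/3"
  proof -
    have "x^2 = \<bar>x\<bar>*\<bar>x\<bar>" by (simp add: power2_eq_square abs_mult[symmetric])
    also have "\<dots> \<le> \<bar>x\<bar>*(A/3)" using x by (intro mult_left_mono) auto
    finally have "x^2 \<le> A*\<bar>x\<bar>/3" by (simp add: mult.commute)
    moreover have "\<bar>2*A*x\<bar> = 2*A*\<bar>x\<bar>" using A by (simp add: abs_mult)
    ultimately show ?thesis by (smt (verit) zero_le_power2)
  qed
  have d: "2*A*(A+x)^2 \<ge> 2*A*(2*A/3)^2" using A Ax by (intro mult_left_mono power_mono) auto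
  have "\<bar>1/(2*A) - A*(1/(A+x))^2/2\<bar> = \<bar>2*A*x + x^2\<bar>/(2*A*(A+x)^2)"
    unfolding eq using A Ax by (simp add: abs_divide)
  also have "\<dots> \<le> (2*A*\<bar>x\<bar> + A*\<bar>x\<bar>/3)/(2*A*(2*A/3)^2)"
    using n d A by (intro frac_le) auto
  also have "\<dots> = (21/8)*\<bar>x\<bar>/A^2" using A by (simp add: field_simps power2_eq_square)
  also have "\<dots> \<le> 3*\<bar>x\<bar>/A^2" using A by (intro divide_right_mono) auto
  finally show ?thesis .
qed


lemma DG_bound:
  fixes A x :: real assumes A: "A \<ge> 3" and x: "\<bar>x\<bar> \<le> A/3"
  shows "\<bar>ln (1 + x/(A+1)) + A*ln (1 + 1/(A+x)) - 1 + 1/(2*A)*(1 - x^2/A)\<bar>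
           \<le> 10*(\<bar>x\<bar>^3/A^3 + (1+\<bar>x\<bar>)/A^2)"
proof -
  define p where "p = x/(A+1)"
  define q where "q = 1/(A+x)"
  have Ax: "A + x \<ge> 2*A/3" using x by auto
  have ap: "\<bar>p\<bar> \<le> \<bar>x\<bar>/A" unfolding p_def using A by (simp add: abs_divide divide_left_mono)
  have ap2: "\<bar>x\<bar>/A \<le> 1/3" using A x by (simp add: field_simps)
  have p12: "\<bar>p\<bar> \<le> 1/2" using ap ap2 by linarith
  have q0: "0 < q" unfolding q_def using A Ax by simp
  have q1: "q \<le> 3/(2*A)" unfolding q_def using A Ax by (simp add: field_simps)
  have "3/(2*A) \<le> 1/2" using A by (simp add: field_simps)
  hence q12: "\<bar>q\<bar> \<le> 1/2" using q0 q1 by simp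
  have e1: "\<bar>ln (1 + p) - p + p^2/2\<bar> \<le> 2*\<bar>x\<bar>^3/A^3"
  proof -
    have "\<bar>ln (1 + p) - p + p^2/2\<bar> \<le> 2*\<bar>p\<bar>^3" by (rule ln3[OF p12])
    also have "\<dots> \<le> 2*(\<bar>x\<bar>/A)^3" by (intro mult_left_mono power_mono ap) auto
    finally show ?thesis by (simp add: power_divide)
  qed
  have e2: "A*\<bar>ln (1 + q) - q + q^2/2\<bar> \<le> (27/4)/A^2"
  proof -
    have "A*\<bar>ln (1 + q) - q + q^2/2\<bar> \<le> A*(2*\<bar>q\<bar>^3)" using A by (intro mult_left_mono ln3[OF q12]) auto
    also have "\<dots> \<le> A*(2*(3/(2*A))^3)" using A q0 q1 by (intro mult_left_mono power_mono) auto
    also have "\<dots> = (27/4)/A^2" using A by (simp add: field_simps power2_eq_square power3_eq_cube)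
    finally show ?thesis .
  qed
  have key: "x/(A+1) + A/(A+x) - 1 = (x^2 - x)/((A+1)*(A+x))"
  proof -
    have nz: "A + 1 \<noteq> 0" "A + x \<noteq> 0" using A Ax by auto
    have h1: "x/(A+1)*((A+1)*(A+x)) = x*(A+x)" using nz by simp
    have h2: "A/(A+x)*((A+1)*(A+x)) = A*(A+1)" using nz by simp
    have "(x/(A+1) + A/(A+x) - 1)*((A+1)*(A+x)) = x/(A+1)*((A+1)*(A+x)) + A/(A+x)*((A+1)*(A+x)) - (A+1)*(A+x)"
      by (simp add: algebra_simps)
    also have "\<dots> = x^2 - x" unfolding h1 h2 by (simp add: algebra_simps power2_eq_square)
    finally show ?thesis using nz by (simp add: eq_divide_eq)
  qed
  define R1 where "R1 = x^2/((A+1)*(A+x)) - x^2/A^2"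
  define R2 where "R2 = x^2/(2*A^2) - (x/(A+1))^2/2"
  define R3 where "R3 = x/((A+1)*(A+x))"
  define R4 where "R4 = 1/(2*A) - A*(1/(A+x))^2/2"
  have b1: "\<bar>R1\<bar> \<le> 2*\<bar>x\<bar>^3/A^3 + 3*\<bar>x\<bar>/A^2" unfolding R1_def by (rule R1_bound[OF A x])
  have b2: "\<bar>R2\<bar> \<le> \<bar>x\<bar>/A^2" unfolding R2_def by (rule R2_bound[OF A x])
  have b3: "\<bar>R3\<bar> \<le> 1.5*\<bar>x\<bar>/A^2" unfolding R3_def by (rule R3_bound[OF A x])
  have b4: "\<bar>R4\<bar> \<le> 3*\<bar>x\<bar>/A^2" unfolding R4_def by (rule R4_bound[OF A x])
  have Aq: "A*q = A/(A+x)" unfolding q_def by simp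
  have ident: "ln (1 + x/(A+1)) + A*ln (1 + 1/(A+x)) - 1 + 1/(2*A)*(1 - x^2/A)
      = (ln (1 + p) - p + p^2/2) + A*(ln (1 + q) - q + q^2/2) + (R1 + R2 - R3 + R4)"
  proof -
    define D where "D = (A+1)*(A+x)"
    have k2: "p + A*q - 1 = x^2/D - x/D" using key unfolding Aq p_def[symmetric] D_def
      by (simp add: diff_divide_distrib)
    have half: "1/(2*A)*(1 - x^2/A) = 1/(2*A) - x^2/(2*A^2)" using A by (simp add: field_simps power2_eq_square)
    have tw: "x^2/A^2 = 2*(x^2/(2*A^2))" using A by simp
    have r1: "R1 = x^2/D - x^2/A^2" unfolding R1_def D_def ..
    have r2: "R2 = x^2/(2*A^2) - p^2/2" unfolding R2_def p_def ..
    have r3: "R3 = x/D" unfolding R3_def D_def ..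
    have r4: "R4 = 1/(2*A) - A*q^2/2" unfolding R4_def q_def ..
    have dl: "A*(ln (1 + q) - q + q^2/2) = A*ln (1+q) - A*q + A*q^2/2" by (simp add: algebra_simps)
    show ?thesis unfolding p_def[symmetric] q_def[symmetric] half r1 r2 r3 r4 dl
      using k2 tw by linarith
  qed
  have tot: "\<bar>ln (1 + x/(A+1)) + A*ln (1 + 1/(A+x)) - 1 + 1/(2*A)*(1 - x^2/A)\<bar>
     \<le> 2*\<bar>x\<bar>^3/A^3 + (27/4)/A^2 + (2*\<bar>x\<bar>^3/A^3 + 3*\<bar>x\<bar>/A^2) + \<bar>x\<bar>/A^2 + 1.5*\<bar>x\<bar>/A^2 + 3*\<bar>x\<bar>/A^2"
  proof -
    have "A*\<bar>ln (1 + q) - q + q^2/2\<bar> = \<bar>A*(ln (1 + q) - q + q^2/2)\<bar>" using A by (simp add: abs_mult)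
    with e2 have e2': "\<bar>A*(ln (1 + q) - q + q^2/2)\<bar> \<le> (27/4)/A^2" by simp
    show ?thesis unfolding ident using e1 e2' b1 b2 b3 b4 by (simp only: abs_le_iff) linarith
  qed
  also have "\<dots> = 4*(\<bar>x\<bar>^3/A^3) + (17/2)*(\<bar>x\<bar>/A^2) + (27/4)*(1/A^2)" by (simp add: field_simps)
  also have "\<dots> \<le> 10*(\<bar>x\<bar>^3/A^3 + (1+\<bar>x\<bar>)/A^2)"
  proof -
    have "(1+\<bar>x\<bar>)/A^2 = 1/A^2 + \<bar>x\<bar>/A^2" by (simp add: add_divide_distrib)
    moreover have "0 \<le> \<bar>x\<bar>^3/A^3" "0 \<le> \<bar>x\<bar>/A^2" "0 \<le> 1/A^2" using A by auto
    moreover have "4*a + 17/2*b + 27/4*c \<le> 10*(a + (c + b))" if "0\<le>a" "0\<le>b" "0\<le>c" for a b c :: real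
      using that by (simp add: algebra_simps)
    ultimately show ?thesis by presburger
  qed
  finally show ?thesis .
qed



lemma DG_LL:
  assumes "real a + x > 0"
  shows "LL (Suc a) x - LL a x = ln (1 + x/(real a+1)) + real a * ln (1 + 1/(real a+x)) - 1"
proof -
  have p1: "real a + 1 > 0" by simp
  have f: "ln (fact (Suc a)) = ln (real a + 1) + ln (fact a)"
    by (simp add: fact_Suc ln_mult add.commute)
  have l1: "ln (1 + x/(real a+1)) = ln (real a + 1 + x) - ln (real a + 1)"
  proof -
    have "1 + x/(real a+1) = (real a + 1 + x)/(real a + 1)" using p1 by (simp add: field_simps)
    thus ?thesis using assms p1 by (simp add: ln_div)
  qed
  have l2: "ln (1 + 1/(real a+x)) = ln (real a + 1 + x) - ln (real a + x)"
  proof -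
    have "1 + 1/(real a+x) = (real a + 1 + x)/(real a + x)" using assms by (simp add: field_simps)
    thus ?thesis using assms by (simp add: ln_div)
  qed
  show ?thesis unfolding LL_def f l1 l2 by (simp add: algebra_simps)
qed

lemma LL_0:
  assumes "real a > 0" "real a + x > 0"
  shows "LL a x - LL a 0 = real a * (ln (1 + x/real a) - x/real a)"
proof -
  have "1 + x/real a = (real a + x)/real a" using assms by (simp add: field_simps)
  hence "ln (1 + x/real a) = ln (real a + x) - ln (real a)" using assms by (simp add: ln_div)
  hence e: "ln (real a + x) = ln (real a) + ln (1 + x/real a)" by simp
  show ?thesis unfolding LL_def e using assms by (simp add: algebra_simps)
qed

lemma LL_shift:
  assumes a: "real a \<ge> 3*y" and y: "y \<ge> 1" and x: "\<bar>x\<bar> \<le> y" and xi: "0 \<le> \<xi>" "\<xi> \<le> 1"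
  shows "\<bar>LL a (x + \<xi>) - LL a x\<bar> \<le> 6*y/real a"
proof -
  define A where "A = real a"
  have A: "A \<ge> 3*y" "A > 0" using a y unfolding A_def by auto
  define t where "t = A + x"
  have t: "t \<ge> 2*A/3" using A x unfolding t_def by auto
  have tp: "t > 0" using t A by auto
  define z where "z = \<xi>/t"
  have z0: "0 \<le> z" unfolding z_def using xi tp by simp
  have z1: "z \<le> 1/t" unfolding z_def using xi tp by (simp add: divide_right_mono)
  have "1/t \<le> 1/2" using t A y tp by (simp add: field_simps)
  hence z12: "\<bar>z\<bar> \<le> 1/2" using z0 z1 by simp
  have eq: "LL a (x + \<xi>) - LL a x = A*(ln (1+z) - z) + (- \<xi>*x/t)"
  proof -
    have "1 + z = (t + \<xi>)/t" unfolding z_def using tp by (simp add: field_simps)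
    hence "ln (1 + z) = ln (t + \<xi>) - ln t" using tp xi by (simp add: ln_div)
    hence e: "ln (real a + (x + \<xi>)) = ln (real a + x) + ln (1 + z)" unfolding t_def A_def by (simp add: algebra_simps)
    have "A*z - \<xi> = - \<xi>*x/t" unfolding z_def t_def using tp t_def by (simp add: field_simps)
    thus ?thesis unfolding LL_def e unfolding A_def[symmetric] t_def by (simp add: algebra_simps)
  qed
  have b1: "\<bar>A*(ln (1+z) - z)\<bar> \<le> 4.5*y/A"
  proof -
    have "\<bar>A*(ln (1+z) - z)\<bar> = A*\<bar>ln (1+z) - z\<bar>" using A by (simp add: abs_mult)
    also have "\<dots> \<le> A*(2*z^2)" using A by (intro mult_left_mono abs_ln_one_plus_x_minus_x_bound z12) auto
    also have "\<dots> \<le> A*(2*(1/t)^2)" using A z0 z1 by (intro mult_left_mono power_mono) auto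
    also have "\<dots> \<le> A*(2*(1/(2*A/3))^2)" using A t tp by (intro mult_left_mono power_mono divide_left_mono) auto
    also have "\<dots> = 4.5/A" using A by (simp add: field_simps power2_eq_square)
    also have "\<dots> \<le> 4.5*y/A" using A y by (intro divide_right_mono) auto
    finally show ?thesis .
  qed
  have b2: "\<bar>- \<xi>*x/t\<bar> \<le> 1.5*y/A"
  proof -
    have "\<bar>- \<xi>*x/t\<bar> = \<xi>*\<bar>x\<bar>/t" using tp xi by (simp add: abs_mult abs_divide)
    also have "\<dots> \<le> y/t"
    proof -
      have "\<xi>*\<bar>x\<bar> \<le> 1*y" using xi x by (intro mult_mono) auto
      thus ?thesis using tp by (intro divide_right_mono) auto
    qed
    also have "\<dots> \<le> y/(2*A/3)" using y t A tp by (intro divide_left_mono) auto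
    also have "\<dots> = 1.5*y/A" using A by (simp add: field_simps)
    finally show ?thesis .
  qed
  have "\<bar>LL a (x + \<xi>) - LL a x\<bar> \<le> 4.5*y/A + 1.5*y/A" unfolding eq using b1 b2 by (simp only: abs_le_iff) linarith
  also have "\<dots> = 6*y/A" by (simp add: field_simps)
  finally show ?thesis unfolding A_def .
qed



lemma LL_0':
  assumes "real a > 0" "real a + x > 0"
  shows "LL a x - LL a 0 = real a * (ln (1 + x/real a) - x/real a)"
proof -
  have "1 + x/real a = (real a + x)/real a" using assms by (simp add: field_simps)
  hence "ln (1 + x/real a) = ln (real a + x) - ln (real a)" using assms by (simp add: ln_div)
  hence e: "ln (real a + x) = ln (real a) + ln (1 + x/real a)" by simp
  show ?thesis unfolding LL_def e using assms by (simp add: algebra_simps)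
qed

lemma LL_deriv:
  assumes "real a + s > 0"
  shows "DERIV (LL a) s :> real a / (real a + s) - 1"
  unfolding LL_def[abs_def] using assms
  by (auto intro!: derivative_eq_intros simp: field_simps)

lemma LL_strict_mono:
  assumes "real a > 0" "- real a < s1" "s1 < s2" "s2 \<le> 0"
  shows "LL a s1 < LL a s2"
proof -
  obtain c where c: "s1 < c" "c < s2" "LL a s2 - LL a s1 = (s2 - s1) * (real a/(real a + c) - 1)"
    using MVT2[of s1 s2 "LL a" "\<lambda>s. real a / (real a + s) - 1"] assms LL_deriv[of a] by force
  have "real a + c > 0" "c < 0" using c assms by auto
  hence "real a/(real a + c) > 1" by (simp add: field_simps)
  hence "(s2 - s1) * (real a/(real a + c) - 1) > 0" using c by simp
  thus ?thesis using c by simp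
qed

lemma cont_LL: "continuous_on {0..w} (\<lambda>y. LL n (y - w))" if "w < real n" for w :: real
  unfolding LL_def using that by (auto intro!: continuous_intros)


lemma b_props:
  fixes w :: real
  assumes w1: "1 \<le> w" and wn: "w \<le> real n / 10"
  shows "0 \<le> bfun (Suc n) w \<and> bfun (Suc n) w \<le> w \<and> LL n (bfun (Suc n) w - w) = LL n w
         \<and> bfun (Suc n) w \<le> 8*w^2/real n"
proof -
  have n0: "real n > 0" using w1 wn by linarith
  have nw: "w < real n" using w1 wn by linarith
  have fd: "fdens (Suc n) (1 + w - y) = exp (LL n (y - w))" if "0 \<le> y" for y
  proof -
    have "1 + w - y = 1 - (y - w)" by simp
    moreover have "real n + (y - w) > 0" using that nw by linarith
    ultimately show ?thesis using fdens_LL by metis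
  qed
  have fw: "fdens (Suc n) (1 - w) = exp (LL n w)" using fdens_LL[of n w] n0 w1 by simp
  define u where "u = w / real n"
  have u0: "0 < u" "u \<le> 1/10" unfolding u_def using n0 w1 wn by (auto simp: field_simps)
  have LLu: "LL n s - LL n 0 = real n * (ln (1 + s/real n) - s/real n)" if "real n + s > 0" for s
    using LL_0'[of n s] n0 that by simp
  have up: "LL n w \<le> LL n 0"
  proof -
    have "ln (1 + w/real n) - w/real n \<le> 0" using ln_add_one_self_le_self[of "w/real n"] n0 w1 by simp
    hence "real n * (ln (1 + w/real n) - w/real n) \<le> 0" using n0 by (simp add: mult_le_0_iff)
    thus ?thesis using LLu[of w] n0 w1 by simp
  qed
  have lo: "LL n (-w) \<le> LL n w"
  proof -
    have u12: "\<bar>u\<bar> \<le> 1/2" "\<bar>-u\<bar> \<le> 1/2" using u0 by auto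
    have a1: "ln (1 + u) - u \<ge> u^3/3 - u^2/2 - 2*u^4" using ln4[OF u12(1)] by (simp add: abs_le_iff power_abs)
    have a2: "ln (1 + -u) - (-u) \<le> 2*u^4 - u^2/2 - u^3/3" using ln4[OF u12(2)] u0 by (simp add: abs_le_iff power_abs)
    have "u^3 * u \<le> u^3 * (1/10)" using u0 by (intro mult_left_mono) auto
    moreover have "u^4 = u^3 * u" by (simp add: eval_nat_numeral)
    ultimately have "u^4 \<le> u^3 * (1/10)" by simp
    hence "ln (1 + -u) - (-u) \<le> ln (1 + u) - u" using a1 a2 u0 zero_le_power[of u 3] by linarith
    hence m: "real n * (ln (1 + -u) - (-u)) \<le> real n * (ln (1 + u) - u)"
      by (rule mult_left_mono) (use n0 in simp)
    have e1: "LL n w - LL n 0 = real n * (ln (1 + u) - u)" unfolding u_def by (rule LLu) (use nw n0 w1 in linarith)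
    have eqm: "(-w)/real n = -u" unfolding u_def by simp
    have "LL n (-w) - LL n 0 = real n * (ln (1 + (-w)/real n) - (-w)/real n)" by (rule LLu) (use nw in linarith)
    hence e2: "LL n (-w) - LL n 0 = real n * (ln (1 + -u) - (-u))" unfolding eqm .
    show ?thesis using m e1 e2 by linarith
  qed
  obtain y0 where y0: "0 \<le> y0" "y0 \<le> w" "LL n (y0 - w) = LL n w"
    using IVT'[of "\<lambda>y. LL n (y - w)" 0 "LL n w" w] lo up w1 cont_LL[OF nw] by auto
  have uniq: "y1 = y2" if "0 \<le> y1" "y1 \<le> w" "0 \<le> y2" "y2 \<le> w" "LL n (y1 - w) = LL n (y2 - w)" for y1 y2
  proof (rule ccontr)
    assume "y1 \<noteq> y2"
    then consider "y1 < y2" | "y2 < y1" by linarith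
    thus False
    proof cases
      case 1 thus False using LL_strict_mono[of n "y1 - w" "y2 - w"] that n0 nw by auto
    next
      case 2 thus False using LL_strict_mono[of n "y2 - w" "y1 - w"] that n0 nw by auto
    qed
  qed
  have P: "(0 \<le> y \<and> y \<le> w \<and> fdens (Suc n) (1 - w) = fdens (Suc n) (1 + w - y)) \<longleftrightarrow>
           (0 \<le> y \<and> y \<le> w \<and> LL n (y - w) = LL n w)" for y
    using fd[of y] fw by auto
  have ex1: "\<exists>!y. 0 \<le> y \<and> y \<le> w \<and> fdens (Suc n) (1 - w) = fdens (Suc n) (1 + w - y)"
    unfolding P using y0 uniq by metis
  define b where "b = bfun (Suc n) w"
  have bP: "0 \<le> b \<and> b \<le> w \<and> fdens (Suc n) (1 - w) = fdens (Suc n) (1 + w - b)"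
    unfolding b_def bfun_def by (rule theI'[OF ex1])
  hence b: "0 \<le> b" "b \<le> w" "LL n (b - w) = LL n w" using P by auto
  define v where "v = (w - b)/real n"
  have v0: "0 \<le> v" "v \<le> u" unfolding v_def u_def using b n0 by (auto simp: divide_right_mono)
  have eqv: "ln (1 + -v) - (-v) = ln (1 + u) - u"
  proof -
    have "real n + (b - w) > 0" using b nw by linarith
    hence "LL n (b - w) - LL n 0 = real n * (ln (1 + -v) - (-v))" using LLu[of "b - w"] unfolding v_def by (simp add: minus_divide_left)
    moreover have "LL n w - LL n 0 = real n * (ln (1 + u) - u)" unfolding u_def by (rule LLu) (use nw n0 w1 in linarith)
    ultimately show ?thesis using b(3) n0 by simp
  qed
  have c1: "\<bar>ln (1 + u) - u + u^2/2\<bar> \<le> 2*\<bar>u\<bar>^3" by (rule ln3) (use u0 in auto)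
  have c2: "\<bar>ln (1 + -v) - (-v) + (-v)^2/2\<bar> \<le> 2*\<bar>-v\<bar>^3" by (rule ln3) (use u0 v0 in auto)
  have v3: "v^3 \<le> u^3" using v0 by (simp add: power_mono)
  have c1': "ln (1 + u) - u + u^2/2 \<le> 2*u^3" using c1 u0 by (simp add: abs_le_iff power_abs)
  have c2': "- ln (1 - v) - v - v^2/2 \<le> 2*v^3" using c2 v0 by (simp add: abs_le_iff power_abs)
  have eqv': "ln (1 - v) + v = ln (1 + u) - u" using eqv by simp
  have "u^2 - v^2 \<le> 8*u^3" using c1' c2' eqv' v3 by linarith
  moreover have "(u - v)*u \<le> u^2 - v^2"
  proof -
    have "(u - v)*u \<le> (u - v)*(u + v)" using v0 by (intro mult_left_mono) auto
    thus ?thesis by (simp add: algebra_simps power2_eq_square)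
  qed
  ultimately have "(u - v)*u \<le> (8*u^2)*u" by (simp add: power2_eq_square power3_eq_cube mult_ac)
  hence uv: "u - v \<le> 8*u^2" using u0 by simp
  have "b = real n * (u - v)" unfolding u_def v_def using n0 by (simp add: field_simps)
  also have "\<dots> \<le> real n * (8*u^2)" using uv n0 by (intro mult_left_mono) auto
  also have "\<dots> = 8*w^2/real n" unfolding u_def using n0 by (simp add: field_simps power2_eq_square)
  finally show ?thesis using b unfolding b_def by auto
qed



lemma wa_bound:
  fixes w :: real and a0 n :: nat
  assumes a3: "3*w \<le> real a0" and an: "a0 \<le> n" and w2: "4*real n \<le> w^2" and w1: "1 \<le> w"
  shows "w/real a0 \<le> 2*((\<Sum>j=a0..n. w^3/(real j)^3) + w/real n)"
proof -
  have a0p: "real a0 > 0" using a3 w1 by linarith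
  have np: "real n > 0" using a0p an by linarith
  have nonneg: "0 \<le> (\<Sum>j=a0..n. w^3/(real j)^3)" using w1 by (intro sum_nonneg) auto
  have dl: "2*((\<Sum>j=a0..n. w^3/(real j)^3) + w/real n) = 2*(\<Sum>j=a0..n. w^3/(real j)^3) + 2*(w/real n)"
    by (rule distrib_left)
  have wn0: "0 \<le> w/real n" using np w1 by simp
  show ?thesis
  proof (cases "n \<le> 2*a0")
    case True
    hence "real n \<le> 2*real a0" by linarith
    hence "w/real a0 \<le> w/(real n/2)" using a0p np w1 by (intro divide_left_mono) auto
    also have "\<dots> = 2*(w/real n)" by simp
    finally show ?thesis using nonneg dl by linarith
  next
    case False
    have sub: "{a0..2*a0} \<subseteq> {a0..n}" using False by auto
    have lb: "w^3/(real (2*a0))^3 \<le> w^3/(real j)^3" if "j \<in> {a0..2*a0}" for j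
    proof -
      have "real j \<le> real (2*a0)" "real j > 0" using that a0p by auto
      thus ?thesis using w1 by (intro divide_left_mono power_mono mult_pos_pos) auto
    qed
    have "(\<Sum>j=a0..2*a0. w^3/(real (2*a0))^3) \<le> (\<Sum>j=a0..2*a0. w^3/(real j)^3)"
      by (rule sum_mono) (rule lb)
    also have "\<dots> \<le> (\<Sum>j=a0..n. w^3/(real j)^3)"
      using sub w1 by (intro sum_mono2) auto
    finally have s1: "real (a0+1) * (w^3/(real (2*a0))^3) \<le> (\<Sum>j=a0..n. w^3/(real j)^3)"
      by simp
    have "w/real a0 \<le> w^3/(8*(real a0)^2)"
    proof -
      have "8*real a0 \<le> w^2" using False w2 by linarith
      hence "w * (8*real a0) \<le> w * w^2" using w1 by (intro mult_left_mono) auto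
      thus ?thesis using a0p by (simp add: field_simps power2_eq_square power3_eq_cube)
    qed
    also have "\<dots> \<le> real (a0+1) * (w^3/(real (2*a0))^3)"
    proof -
      have "w^3/(8*(real a0)^2) = real a0 * (w^3/(real (2*a0))^3)" using a0p
        by (simp add: field_simps power2_eq_square power3_eq_cube)
      also have "\<dots> \<le> real (a0+1) * (w^3/(real (2*a0))^3)" using w1 a0p by (intro mult_right_mono) auto
      finally show ?thesis .
    qed
    finally show ?thesis using s1 wn0 nonneg dl by linarith
  qed
qed



definition dd :: "nat \<Rightarrow> real \<Rightarrow> real" where
  "dd j x = 1 / (2 * real j) * (1 - x^2 / real j)"

lemma term_bound:
  fixes a :: nat and w x0 :: real
  assumes a3: "3*w \<le> real a" and an: "4*real a \<le> w^2" and w1: "1 \<le> w" and x0: "\<bar>x0\<bar> \<le> w"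
  shows "\<bar>LL (Suc a) x0 - LL a x0 + dd a x0\<bar> \<le> 15*(w^3/(real a)^3)"
proof -
  define A where "A = real a"
  have A3: "A \<ge> 3" using a3 w1 unfolding A_def by linarith
  have xA: "\<bar>x0\<bar> \<le> A/3" using a3 x0 unfolding A_def by linarith
  have pos: "real a + x0 > 0" using xA A3 unfolding A_def by linarith
  have "LL (Suc a) x0 - LL a x0 + dd a x0 = ln (1 + x0/(A+1)) + A*ln (1 + 1/(A+x0)) - 1 + 1/(2*A)*(1 - x0^2/A)"
    unfolding DG_LL[OF pos] dd_def A_def by simp
  also have "\<bar>\<dots>\<bar> \<le> 10*(\<bar>x0\<bar>^3/A^3 + (1+\<bar>x0\<bar>)/A^2)" by (rule DG_bound[OF A3 xA])
  also have "\<dots> \<le> 10*(w^3/A^3 + (w^3/A^3)/2)"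
  proof -
    have "\<bar>x0\<bar>^3/A^3 \<le> w^3/A^3" using x0 A3 by (intro divide_right_mono power_mono) auto
    moreover have "(1+\<bar>x0\<bar>)/A^2 \<le> (w^3/A^3)/2"
    proof -
      have "(1+\<bar>x0\<bar>)/A^2 \<le> (2*w)/A^2" using x0 w1 A3 by (intro divide_right_mono) auto
      also have "\<dots> = (w^3/A^3)/2 * (4*A/w^2)" using A3 w1 by (simp add: field_simps power2_eq_square power3_eq_cube)
      also have "\<dots> \<le> (w^3/A^3)/2 * 1"
      proof (rule mult_left_mono)
        show "4*A/w^2 \<le> 1" using an w1 unfolding A_def by (simp add: field_simps)
        show "0 \<le> (w^3/A^3)/2" using w1 A3 by simp
      qed
      finally show ?thesis by simp
    qed
    ultimately show ?thesis by (intro mult_left_mono add_mono) auto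
  qed
  also have "\<dots> = 15*(w^3/(real a)^3)" unfolding A_def by simp
  finally show ?thesis .
qed



lemma part2:
  fixes n k :: nat and w \<xi> b v C :: real
  assumes C: "40 \<le> C" and w1: "1 \<le> w" and wn: "w \<le> real n / 10" and bdef: "b = bfun (n+1) w"
    and xi: "0 \<le> \<xi>" "\<xi> \<le> 1" and ws: "2*sqrt (real n) \<le> w" and kn: "real k \<le> real n - 3*w"
    and v: "v \<in> {fdens (n + 1 - k) (1 + w - b - \<xi>), fdens (n + 1 - k) (1 - w - \<xi>)}"
  shows "\<exists>(\<theta>s::nat \<Rightarrow> real) (\<theta>::real). (\<forall>j \<in> {n - k..n}. \<bar>\<theta>s j\<bar> \<le> 1) \<and> \<bar>\<theta>\<bar> \<le> 1 \<and>
          v = fdens (n + 1) (1 - w) *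
              exp ((\<Sum>j = n - k..n. 1 / (2 * real j) * (1 - w\<^sup>2 / real j)
                         + \<theta>s j * C * w ^ 3 / (real j) ^ 3)
                   + \<theta> * C * w / real n)"
proof -
  have np: "real n > 0" using w1 wn by linarith
  have kn': "k \<le> n" using kn w1 by linarith
  define a0 where "a0 = n - k"
  have ra0: "real a0 = real n - real k" unfolding a0_def using kn' by simp
  have a3: "3*w \<le> real a0" using ra0 kn by linarith
  have a0n: "a0 \<le> n" unfolding a0_def by simp
  have m: "n + 1 - k = Suc a0" unfolding a0_def using kn' by simp
  have w2: "4*real n \<le> w^2"
  proof -
    have "(2*sqrt (real n))^2 \<le> w^2" using ws by (intro power_mono) auto
    thus ?thesis by (simp add: power_mult_distrib)
  qed
  have bp: "0 \<le> b" "b \<le> w" "LL n (b - w) = LL n w" "b \<le> 8*w^2/real n"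
    using b_props[OF w1 wn] unfolding bdef by auto
  have ex: "\<exists>x0 s. s = x0 + \<xi> \<and> \<bar>x0\<bar> \<le> w \<and> LL n x0 = LL n w \<and> v = exp (LL a0 s)
             \<and> 0 \<le> w^2 - x0^2 \<and> w^2 - x0^2 \<le> 16*w^3/real n"
  proof (cases "v = fdens (n + 1 - k) (1 + w - b - \<xi>)")
    case True
    have pos: "real a0 + (b - w + \<xi>) > 0" using a3 bp xi w1 by linarith
    have "v = exp (LL a0 (b - w + \<xi>))" unfolding True m
      using fdens_LL[OF pos] by (simp add: algebra_simps)
    moreover have "\<bar>b - w\<bar> \<le> w" using bp by auto
    moreover have "w^2 - (b - w)^2 = b*(2*w - b)" by (simp add: algebra_simps power2_eq_square)
    moreover have "0 \<le> b*(2*w - b)" using bp by simp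
    moreover have "b*(2*w - b) \<le> 16*w^3/real n"
    proof -
      have "b*(2*w - b) \<le> b*(2*w)" using bp by (intro mult_left_mono) auto
      also have "\<dots> \<le> (8*w^2/real n)*(2*w)" using bp w1 by (intro mult_right_mono) auto
      also have "\<dots> = 16*w^3/real n" by (simp add: power2_eq_square power3_eq_cube)
      finally show ?thesis .
    qed
    ultimately show ?thesis using bp by metis
  next
    case False
    hence Tv: "v = fdens (n + 1 - k) (1 - w - \<xi>)" using v by auto
    have pos: "real a0 + (w + \<xi>) > 0" using a3 xi w1 by linarith
    have "v = exp (LL a0 (w + \<xi>))" unfolding Tv m
      using fdens_LL[OF pos] by (simp add: algebra_simps)
    moreover have "0 \<le> 16*w^3/real n" using w1 np by simp
    ultimately show ?thesis using w1 by force
  qed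
  then obtain x0 s where xs: "s = x0 + \<xi>" "\<bar>x0\<bar> \<le> w" "LL n x0 = LL n w" "v = exp (LL a0 s)"
      "0 \<le> w^2 - x0^2" "w^2 - x0^2 \<le> 16*w^3/real n" by blast
  define S where "S = (\<Sum>j=a0..n. w^3/(real j)^3)"
  define T where "T = (\<Sum>j=a0..<n. w^3/(real j)^3)"
  have TS: "T \<le> S" unfolding T_def S_def using w1 by (intro sum_mono2) auto
  have T0: "0 \<le> T" unfolding T_def using w1 by (intro sum_nonneg) auto
  define t where "t a = LL (Suc a) x0 - LL a x0 + dd a x0" for a
  define E where "E = LL a0 s - LL n w - (\<Sum>j=a0..n. dd j w)"
  have tele: "(\<Sum>a=a0..<n. LL (Suc a) x0 - LL a x0) = LL n x0 - LL a0 x0"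
    by (rule sum_Suc_diff'[OF a0n])
  have sumt: "(\<Sum>a=a0..<n. t a) = LL n x0 - LL a0 x0 + (\<Sum>a=a0..<n. dd a x0)"
    unfolding t_def sum.distrib tele ..
  have sumd: "(\<Sum>j=a0..n. dd j w) = (\<Sum>j=a0..<n. dd j w) + dd n w"
    using a0n by (simp add: sum.atLeastLessThan_Suc atLeastLessThanSuc_atLeastAtMost[symmetric])
  have diffs: "(\<Sum>a=a0..<n. dd a x0) - (\<Sum>a=a0..<n. dd a w) = (\<Sum>a=a0..<n. dd a x0 - dd a w)"
    by (simp add: sum_subtractf)
  have Edec: "E = (LL a0 s - LL a0 x0) - (\<Sum>a=a0..<n. t a) + (\<Sum>a=a0..<n. dd a x0 - dd a w) - dd n w"
    unfolding E_def sumt sumd diffs[symmetric] using xs(3) by simp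
  have bE1: "\<bar>LL a0 s - LL a0 x0\<bar> \<le> 12*(S + w/real n)"
  proof -
    have "\<bar>LL a0 s - LL a0 x0\<bar> \<le> 6*w/real a0" unfolding xs(1)
      by (rule LL_shift[OF a3 w1 xs(2) xi])
    also have "\<dots> = 6*(w/real a0)" by simp
    also have "\<dots> \<le> 6*(2*(S + w/real n))" unfolding S_def
      using wa_bound[OF a3 a0n w2 w1] by (intro mult_left_mono) auto
    finally show ?thesis by simp
  qed
  have bt: "\<bar>\<Sum>a=a0..<n. t a\<bar> \<le> 15*T"
  proof -
    have "\<bar>\<Sum>a=a0..<n. t a\<bar> \<le> (\<Sum>a=a0..<n. \<bar>t a\<bar>)" by (rule sum_abs)
    also have "\<dots> \<le> (\<Sum>a=a0..<n. 15*(w^3/(real a)^3))"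
    proof (rule sum_mono)
      fix a assume a: "a \<in> {a0..<n}"
      have "3*w \<le> real a" using a a3 by auto
      moreover have "4*real a \<le> w^2" using a w2 by auto
      ultimately show "\<bar>t a\<bar> \<le> 15*(w^3/(real a)^3)" unfolding t_def
        by (rule term_bound[OF _ _ w1 xs(2)])
    qed
    also have "\<dots> = 15*T" unfolding T_def by (simp add: sum_distrib_left)
    finally show ?thesis .
  qed
  have bd: "\<bar>\<Sum>a=a0..<n. dd a x0 - dd a w\<bar> \<le> 8*T"
  proof -
    have "\<bar>\<Sum>a=a0..<n. dd a x0 - dd a w\<bar> \<le> (\<Sum>a=a0..<n. \<bar>dd a x0 - dd a w\<bar>)" by (rule sum_abs)
    also have "\<dots> \<le> (\<Sum>a=a0..<n. 8*(w^3/(real a)^3))"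
    proof (rule sum_mono)
      fix a assume a: "a \<in> {a0..<n}"
      have ap: "real a > 0" "real a \<le> real n" using a a3 w1 by auto
      have "dd a x0 - dd a w = (w^2 - x0^2)/(2*(real a)^2)" unfolding dd_def using ap
        by (simp add: field_simps power2_eq_square)
      hence "\<bar>dd a x0 - dd a w\<bar> = (w^2 - x0^2)/(2*(real a)^2)" using xs(5) by simp
      also have "\<dots> \<le> (16*w^3/real n)/(2*(real a)^2)" using xs(6) ap by (intro divide_right_mono) auto
      also have "\<dots> \<le> (16*w^3/real a)/(2*(real a)^2)" using ap w1
        by (intro divide_right_mono divide_left_mono) auto
      also have "\<dots> = 8*(w^3/(real a)^3)" using ap by (simp add: field_simps power2_eq_square power3_eq_cube)
      finally show "\<bar>dd a x0 - dd a w\<bar> \<le> 8*(w^3/(real a)^3)" .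
    qed
    also have "\<dots> = 8*T" unfolding T_def by (simp add: sum_distrib_left)
    finally show ?thesis .
  qed
  have bn: "\<bar>dd n w\<bar> \<le> w/real n"
  proof -
    have "w^2/real n \<le> w/10" using wn w1 np by (simp add: field_simps power2_eq_square)
    moreover have "0 \<le> w^2/real n" using np by simp
    ultimately have h: "0 \<le> 1 + w^2/real n" "1 + w^2/real n \<le> 2*w" using w1 by linarith+
    have "\<bar>dd n w\<bar> = 1/(2*real n) * \<bar>1 - w^2/real n\<bar>" unfolding dd_def using np by (simp add: abs_mult)
    also have "\<dots> \<le> 1/(2*real n) * (1 + w^2/real n)"
    proof (rule mult_left_mono)
      have "0 \<le> w^2/real n" using np by simp
      thus "\<bar>1 - w^2/real n\<bar> \<le> 1 + w^2/real n" by linarith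
    qed (use np in simp)
    also have "\<dots> \<le> 1/(2*real n) * (2*w)" using h np by (intro mult_left_mono) auto
    also have "\<dots> = w/real n" using np by simp
    finally show ?thesis .
  qed
  have Epos: "0 < S + w/real n" using T0 TS w1 np by (smt (verit) divide_pos_pos)
  have bE: "\<bar>E\<bar> \<le> C*(S + w/real n)"
  proof -
    have "\<bar>E\<bar> \<le> 12*(S + w/real n) + 15*T + 8*T + w/real n" unfolding Edec
      using bE1 bt bd bn by (simp only: abs_le_iff) linarith
    also have "\<dots> \<le> 40*(S + w/real n)"
    proof -
      have "0 \<le> w/real n" using w1 np by simp
      moreover have "40*(S + w/real n) = 40*S + 40*(w/real n)" by (rule distrib_left)
      moreover have "12*(S + w/real n) = 12*S + 12*(w/real n)" by (rule distrib_left)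
      ultimately show ?thesis using TS T0 by linarith
    qed
    also have "\<dots> \<le> C*(S + w/real n)" using C Epos by (intro mult_right_mono) auto
    finally show ?thesis .
  qed
  define \<theta> where "\<theta> = E/(C*(S + w/real n))"
  have Cp: "C > 0" using C by simp
  have th1: "\<bar>\<theta>\<bar> \<le> 1" unfolding \<theta>_def using bE Cp Epos by (simp add: abs_divide abs_mult)
  have sumeq: "(\<Sum>j = n - k..n. 1 / (2 * real j) * (1 - w\<^sup>2 / real j) + \<theta> * C * w ^ 3 / (real j) ^ 3)
      = (\<Sum>j=a0..n. dd j w) + \<theta> * C * S"
    unfolding a0_def[symmetric] dd_def[symmetric] S_def sum.distrib
    by (simp add: sum_distrib_left mult_ac)
  have Eeq: "\<theta> * C * S + \<theta> * C * w / real n = E"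
  proof -
    have "\<theta> * C * S + \<theta> * C * w / real n = \<theta> * (C*(S + w/real n))" by (simp add: algebra_simps)
    also have "\<dots> = E" unfolding \<theta>_def using Cp Epos by simp
    finally show ?thesis .
  qed
  have "v = exp (LL n w) * exp ((\<Sum>j=a0..n. dd j w) + E)" unfolding xs(4) E_def
    by (simp add: exp_add[symmetric])
  moreover have "fdens (n+1) (1 - w) = exp (LL n w)" using fdens_LL[of n w] np w1 by simp
  ultimately have "v = fdens (n + 1) (1 - w) *
              exp ((\<Sum>j = n - k..n. 1 / (2 * real j) * (1 - w\<^sup>2 / real j)
                         + \<theta> * C * w ^ 3 / (real j) ^ 3)
                   + \<theta> * C * w / real n)"
    unfolding sumeq using Eeq by (simp add: add.assoc)
  thus ?thesis using th1 by (intro exI[where x="\<lambda>_. \<theta>"] exI[where x="\<theta>"]) auto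
qed



lemma mode_aux:
  fixes t :: real assumes t: "0 \<le> t"
  shows "t^a * exp (- t) \<le> (real a)^a * exp (- real a)"
proof (cases "a = 0")
  case True thus ?thesis using t by simp
next
  case False
  hence ap: "real a > 0" by simp
  show ?thesis
  proof (cases "t = 0")
    case True
    have "t^a * exp (- t) = 0" using True ap by simp
    moreover have "0 \<le> (real a)^a * exp (- real a)" by simp
    ultimately show ?thesis by linarith
  next
    case False
    hence tp: "t > 0" using t by simp
    have "ln (t / real a) \<le> t / real a - 1" using tp ap by (intro ln_le_minus_one) simp
    hence "real a * ln (t / real a) \<le> real a * (t / real a - 1)" using ap by (intro mult_left_mono) auto
    hence "real a * ln t - t \<le> real a * ln (real a) - real a" using ap tp by (simp add: ln_div algebra_simps)
    hence "exp (real a * ln t - t) \<le> exp (real a * ln (real a) - real a)" by simp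
    moreover have "exp (real a * ln t - t) = t^a * exp (- t)" using tp
      by (simp add: exp_diff exp_of_nat_mult exp_minus field_simps)
    moreover have "exp (real a * ln (real a) - real a) = (real a)^a * exp (- real a)" using ap
      by (simp add: exp_diff exp_of_nat_mult exp_minus field_simps)
    ultimately show ?thesis by simp
  qed
qed

lemma fdens_nonneg: "0 \<le> fdens h y"
  unfolding fdens_def by auto

lemma fdens_mode:
  fixes w :: real assumes h: "1 \<le> h" and w: "0 < w"
  shows "fdens h y \<le> exp w * fdens h (1 - w)"
proof -
  obtain a where ha: "h = Suc a" using h by (cases h) auto
  have F: "fdens h (1 - w) = (real a + w)^a / (exp (real a + w) * fact a)"
    unfolding fdens_def ha using w by simp
  have Fp: "0 \<le> fdens h (1 - w)" by (rule fdens_nonneg)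
  show ?thesis
  proof (cases "y \<le> real h")
    case False
    hence "fdens h y = 0" unfolding fdens_def by simp
    thus ?thesis using Fp by simp
  next
    case True
    define t where "t = real h - y"
    have t0: "0 \<le> t" using True unfolding t_def by simp
    have fy: "fdens h y = t^a / (exp t * fact a)" unfolding fdens_def t_def using True ha by simp
    have "t^a / exp t = t^a * exp (-t)" by (simp add: exp_minus field_simps)
    also have "\<dots> \<le> (real a)^a * exp (- real a)" by (rule mode_aux[OF t0])
    also have "\<dots> \<le> (real a + w)^a * exp (- real a)" using w by (intro mult_right_mono power_mono) auto
    also have "\<dots> = exp w * ((real a + w)^a / exp (real a + w))" by (simp add: exp_add exp_minus field_simps)
    finally have "t^a / exp t \<le> exp w * ((real a + w)^a / exp (real a + w))" .
    hence "t^a / exp t / fact a \<le> exp w * ((real a + w)^a / exp (real a + w)) / fact a"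
      by (intro divide_right_mono) auto
    thus ?thesis unfolding fy F by (simp add: field_simps)
  qed
qed



lemma powr_facts:
  fixes w :: real and h :: nat
  assumes w1: "1 \<le> w" and hw: "w powr (3/2) \<le> real h"
  shows "w \<le> real h" "w^3 \<le> (real h)^2" "real h < 4*w \<Longrightarrow> w < 16"
proof -
  have "w powr 1 \<le> w powr (3/2)" using w1 by (intro powr_mono) auto
  thus "w \<le> real h" using hw w1 by simp
  have wp: "0 \<le> w powr (3/2)" by simp
  have "w^3 = w powr 3" using w1 by (simp add: powr_numeral)
  also have "\<dots> = w powr (3/2) * w powr (3/2)" by (simp add: powr_add[symmetric])
  also have "\<dots> = (w powr (3/2))^2" by (simp add: power2_eq_square)
  also have "\<dots> \<le> (real h)^2" using hw wp by (intro power_mono) auto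
  finally show "w^3 \<le> (real h)^2" .
  assume h4: "real h < 4*w"
  have "w powr (3/2) = w powr (1 + 1/2)" by simp
  also have "\<dots> = w powr 1 * w powr (1/2)" by (rule powr_add)
  also have "\<dots> = w * sqrt w" using w1 by (simp add: powr_half_sqrt)
  finally have eqs: "w powr (3/2) = w * sqrt w" .
  have "w * sqrt w < w * 4" using hw h4 unfolding eqs by linarith
  hence "sqrt w < 4" using w1 by simp
  hence "sqrt w < sqrt 16" by simp
  thus "w < 16" by (simp only: real_sqrt_less_iff)
qed

lemma part1:
  fixes n h :: nat and w \<xi> b C :: real
  assumes C: "exp 200 \<le> C" and w1: "1 \<le> w" and wn: "w \<le> real n / 10" and bdef: "b = bfun (n+1) w"
    and xi: "0 \<le> \<xi>" "\<xi> \<le> 1" and hw: "w powr (3/2) \<le> real h" and hn: "h \<le> n"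
  shows "\<bar>fdens h (1 + w - b - \<xi>) - fdens h (1 - w - \<xi>)\<bar>
            \<le> C * (w / real h + w ^ 3 / (real h)\<^sup>2) * fdens h (1 - w)"
proof -
  note pf = powr_facts[OF w1 hw]
  have hp: "real h > 0" using pf(1) w1 by linarith
  have h1: "1 \<le> h" using hp by simp
  define r where "r = w / real h + w ^ 3 / (real h)\<^sup>2"
  have r1: "w / real h \<le> 1" using pf(1) hp by simp
  have r2: "w ^ 3 / (real h)\<^sup>2 \<le> 1" using pf(2) hp by simp
  have r0: "0 \<le> w / real h" "0 \<le> w ^ 3 / (real h)\<^sup>2" using w1 hp by auto
  have rle: "r \<le> 2" "0 \<le> r" unfolding r_def using r1 r2 r0 by linarith+
  define F where "F = fdens h (1 - w)"
  have F0: "0 \<le> F" unfolding F_def by (rule fdens_nonneg)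
  have Cp: "0 < C" using C by (smt (verit) exp_gt_zero)
  show ?thesis
  proof (cases "real h < 4*w")
    case True
    have w16: "w < 16" using pf(3) True .
    have "\<bar>fdens h (1 + w - b - \<xi>) - fdens h (1 - w - \<xi>)\<bar> \<le> fdens h (1 + w - b - \<xi>) + fdens h (1 - w - \<xi>)"
      using fdens_nonneg[of h "1 + w - b - \<xi>"] fdens_nonneg[of h "1 - w - \<xi>"] by linarith
    also have "\<dots> \<le> exp w * F + exp w * F" unfolding F_def
      using fdens_mode[OF h1, of w] w1 by (intro add_mono) auto
    also have "\<dots> \<le> 2 * exp 16 * F"
    proof -
      have "exp w \<le> exp 16" using w16 by simp
      hence "exp w * F \<le> exp 16 * F" using F0 by (intro mult_right_mono) auto
      moreover have "2 * exp 16 * F = exp 16 * F + exp 16 * F" by simp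
      ultimately show ?thesis by linarith
    qed
    also have "\<dots> \<le> 2 * exp 16 * (4 * r) * F"
    proof -
      have "1 \<le> 4 * (w / real h)" using True hp by (simp add: field_simps)
      moreover have "4 * r = 4 * (w / real h) + 4 * (w ^ 3 / (real h)\<^sup>2)" unfolding r_def by (rule distrib_left)
      ultimately have "1 \<le> 4 * r" using r0 by linarith
      hence "2 * exp 16 * 1 \<le> 2 * exp 16 * (4 * r)" by (intro mult_left_mono) auto
      thus ?thesis using F0 by (intro mult_right_mono) auto
    qed
    also have "\<dots> = (8 * exp 16) * r * F" by simp
    also have "\<dots> \<le> C * r * F"
    proof -
      have "8 * exp (16::real) \<le> exp 184 * exp 16" using exp_ge_add_one_self[of "184::real"] by (intro mult_right_mono) auto
      also have "\<dots> = exp 200" by (simp add: exp_add[symmetric])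
      finally have "8 * exp 16 \<le> C" using C by linarith
      thus ?thesis using rle F0 by (intro mult_right_mono) auto
    qed
    finally show ?thesis unfolding r_def F_def .
  next
    case False
    hence h4: "4*w \<le> real h" by simp
    obtain a where ha: "h = Suc a" using h1 by (cases h) auto
    have ra: "real a = real h - 1" using ha by simp
    have a3: "3*w \<le> real a" using ra h4 w1 by linarith
    have ah: "real h / 2 \<le> real a" using ra h4 w1 by linarith
    have ap: "real a > 0" using a3 w1 by linarith
    have bp: "0 \<le> b" "b \<le> w" "LL n (b - w) = LL n w" "b \<le> 8*w^2/real n"
      using b_props[OF w1 wn] unfolding bdef by auto
    have np: "real n > 0" using w1 wn by linarith
    have hnr: "real h \<le> real n" using hn by simp
    have FL: "F = exp (LL a w)" unfolding F_def ha using fdens_LL[of a w] ap w1 by simp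
    have f2: "fdens h (1 - w - \<xi>) = exp (LL a (w + \<xi>))" unfolding ha
      using fdens_LL[of a "w + \<xi>"] ap w1 xi by (simp add: algebra_simps)
    have f1: "fdens h (1 + w - b - \<xi>) = exp (LL a ((b - w) + \<xi>))" unfolding ha
      using fdens_LL[of a "(b - w) + \<xi>"] a3 bp xi w1 by (simp add: algebra_simps)
    define D1 where "D1 = LL a ((b - w) + \<xi>) - LL a w"
    define D2 where "D2 = LL a (w + \<xi>) - LL a w"
    have wa: "6*w/real a \<le> 12*(w/real h)"
    proof -
      have "6*w/real a \<le> 6*w/(real h/2)" using ah hp w1 by (intro divide_left_mono) auto
      thus ?thesis by simp
    qed
    have bD2: "\<bar>D2\<bar> \<le> 12*(w/real h)" unfolding D2_def
      using LL_shift[OF a3 w1 _ xi, of w] wa w1 by simp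
    have s1: "\<bar>LL a ((b - w) + \<xi>) - LL a (b - w)\<bar> \<le> 12*(w/real h)"
      using LL_shift[OF a3 w1 _ xi, of "b - w"] wa bp by simp
    have s2: "\<bar>LL a (b - w) - LL a w\<bar> \<le> 32*(w^3/(real h)^2)"
    proof -
      define u where "u = w / real a"
      define v where "v = (b - w) / real a"
      have u0: "0 < u" "u \<le> 1/3" unfolding u_def using a3 w1 ap by (auto simp: field_simps)
      have v0: "\<bar>v\<bar> \<le> u" unfolding v_def u_def using bp ap by (simp add: abs_divide divide_right_mono)
      have e1: "LL a w - LL a 0 = real a * (ln (1 + u) - u)" unfolding u_def
        by (rule LL_0) (use ap w1 in auto)
      have e2: "LL a (b - w) - LL a 0 = real a * (ln (1 + v) - v)" unfolding v_def
        by (rule LL_0) (use ap a3 bp w1 in auto)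
      have c1: "\<bar>ln (1 + u) - u + u^2/2\<bar> \<le> 2*\<bar>u\<bar>^3" by (rule ln3) (use u0 in auto)
      have c2: "\<bar>ln (1 + v) - v + v^2/2\<bar> \<le> 2*\<bar>v\<bar>^3" by (rule ln3) (use u0 v0 in auto)
      have v3: "\<bar>v\<bar>^3 \<le> u^3" using v0 by (intro power_mono) auto
      have uu: "\<bar>u\<bar>^3 = u^3" using u0 by simp
      have diff: "LL a (b - w) - LL a w = real a * ((u^2 - v^2)/2 + ((ln (1 + v) - v + v^2/2) - (ln (1 + u) - u + u^2/2)))"
      proof -
        have i1: "(u^2 - v^2)/2 + ((ln (1 + v) - v + v^2/2) - (ln (1 + u) - u + u^2/2)) = (ln (1 + v) - v) - (ln (1 + u) - u)"
          by (simp add: field_simps)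
        have "LL a (b - w) - LL a w = real a * (ln (1 + v) - v) - real a * (ln (1 + u) - u)" using e1 e2 by linarith
        thus ?thesis unfolding i1 by (simp add: right_diff_distrib)
      qed
      have q1: "0 \<le> u^2 - v^2" "u^2 - v^2 \<le> 16*w^3/real n/(real a)^2"
      proof -
        have "u^2 - v^2 = (w^2 - (b - w)^2)/(real a)^2" unfolding u_def v_def using ap
          by (simp add: field_simps power2_eq_square)
        moreover have "w^2 - (b - w)^2 = b*(2*w - b)" by (simp add: algebra_simps power2_eq_square)
        moreover have "0 \<le> b*(2*w - b)" using bp by simp
        moreover have "b*(2*w - b) \<le> 16*w^3/real n"
        proof -
          have "b*(2*w - b) \<le> b*(2*w)" using bp by (intro mult_left_mono) auto
          also have "\<dots> \<le> (8*w^2/real n)*(2*w)" using bp w1 by (intro mult_right_mono) auto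
          also have "\<dots> = 16*w^3/real n" by (simp add: power2_eq_square power3_eq_cube)
          finally show ?thesis .
        qed
        ultimately have "u^2 - v^2 = b*(2*w - b)/(real a)^2" "0 \<le> b*(2*w - b)" "b*(2*w - b) \<le> 16*w^3/real n"
          by auto
        thus "0 \<le> u^2 - v^2" "u^2 - v^2 \<le> 16*w^3/real n/(real a)^2" using ap
          by (auto intro!: divide_right_mono simp del: divide_divide_eq_left)
      qed
      have "\<bar>LL a (b - w) - LL a w\<bar> \<le> real a * ((u^2 - v^2)/2 + 4*u^3)"
      proof -
        have "\<bar>(u^2 - v^2)/2 + ((ln (1 + v) - v + v^2/2) - (ln (1 + u) - u + u^2/2))\<bar> \<le> (u^2 - v^2)/2 + 4*u^3"
        proof -
          define P where "P = ln (1 + v) - v + v^2/2"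
          define Q where "Q = ln (1 + u) - u + u^2/2"
          define X where "X = u^2 - v^2"
          have "\<bar>P\<bar> \<le> 2*u^3" using c2 v3 unfolding P_def by linarith
          moreover have "\<bar>Q\<bar> \<le> 2*u^3" using c1 uu unfolding Q_def by linarith
          moreover have "0 \<le> X" using q1(1) unfolding X_def .
          ultimately have "\<bar>X/2 + (P - Q)\<bar> \<le> X/2 + 4*u^3" by linarith
          thus ?thesis unfolding P_def Q_def X_def .
        qed
        thus ?thesis unfolding diff using ap by (simp add: abs_mult mult_left_mono)
      qed
      also have "\<dots> = real a * (u^2 - v^2)/2 + 4*(w^3/(real a)^2)" unfolding u_def using ap
        by (simp add: field_simps power2_eq_square power3_eq_cube)
      also have "\<dots> \<le> 16*(w^3/(real h)^2) + 16*(w^3/(real h)^2)"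
      proof (rule add_mono)
        have "real a * (u^2 - v^2)/2 \<le> real a * (16*w^3/real n/(real a)^2)/2"
          using q1 ap by (intro divide_right_mono mult_left_mono) auto
        also have "\<dots> = 8*w^3/(real n * real a)" using ap by (simp add: field_simps power2_eq_square)
        also have "\<dots> \<le> 8*w^3/(real h * (real h/2))" using hnr ah hp w1
          by (intro divide_left_mono mult_mono) auto
        also have "\<dots> = 16*(w^3/(real h)^2)" by (simp add: field_simps power2_eq_square)
        finally show "real a * (u^2 - v^2)/2 \<le> 16*(w^3/(real h)^2)" .
        have "4*(w^3/(real a)^2) \<le> 4*(w^3/(real h/2)^2)" using ah hp w1
          by (intro mult_left_mono divide_left_mono power_mono mult_pos_pos) auto
        also have "\<dots> = 16*(w^3/(real h)^2)" by (simp add: field_simps power2_eq_square)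
        finally show "4*(w^3/(real a)^2) \<le> 16*(w^3/(real h)^2)" .
      qed
      finally show ?thesis by simp
    qed
    have bD1: "\<bar>D1\<bar> \<le> 32*r"
    proof -
      have "\<bar>D1\<bar> \<le> 12*(w/real h) + 32*(w^3/(real h)^2)" unfolding D1_def using s1 s2 by (simp only: abs_le_iff) linarith
      thus ?thesis unfolding r_def using r0 by simp
    qed
    have bD2': "\<bar>D2\<bar> \<le> 32*r" using bD2 r0 unfolding r_def by simp
    have ef1: "fdens h (1 + w - b - \<xi>) = F * exp D1" unfolding f1 FL D1_def by (simp add: exp_add[symmetric])
    have ef2: "fdens h (1 - w - \<xi>) = F * exp D2" unfolding f2 FL D2_def by (simp add: exp_add[symmetric])
    have eb: "\<bar>exp D - 1\<bar> \<le> 32*r*exp 64" if "\<bar>D\<bar> \<le> 32*r" for D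
    proof -
      have "\<bar>exp D - 1\<bar> \<le> \<bar>D\<bar> * exp \<bar>D\<bar>" by (rule exp_m1_bound)
      also have "\<dots> \<le> (32*r) * exp 64" using that rle by (intro mult_mono) auto
      finally show ?thesis .
    qed
    have "\<bar>fdens h (1 + w - b - \<xi>) - fdens h (1 - w - \<xi>)\<bar> = F * \<bar>(exp D1 - 1) - (exp D2 - 1)\<bar>"
    proof -
      have "F * exp D1 - F * exp D2 = F * ((exp D1 - 1) - (exp D2 - 1))" by (simp add: algebra_simps)
      thus ?thesis unfolding ef1 ef2 using F0 by (simp add: abs_mult)
    qed
    also have "\<dots> \<le> F * (32*r*exp 64 + 32*r*exp 64)"
    proof (rule mult_left_mono)
      show "\<bar>(exp D1 - 1) - (exp D2 - 1)\<bar> \<le> 32*r*exp 64 + 32*r*exp 64"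
        using eb[OF bD1] eb[OF bD2'] by linarith
    qed (rule F0)
    also have "\<dots> = (64 * exp 64) * r * F" by (simp add: algebra_simps)
    also have "\<dots> \<le> C * r * F"
    proof -
      have "64 * exp (64::real) \<le> exp 136 * exp 64" using exp_ge_add_one_self[of "136::real"] by (intro mult_right_mono) auto
      also have "\<dots> = exp 200" by (simp add: exp_add[symmetric])
      finally have "64 * exp 64 \<le> C" using C by linarith
      thus ?thesis using rle F0 by (intro mult_right_mono) auto
    qed
    finally show ?thesis unfolding r_def F_def .
  qed
qed


theorem lemma7:
  shows "\<exists>C::real. C > 0 \<and>
    (\<forall>(n::nat) (w::real) (b::real) (\<xi>::real).
       n \<ge> 100 \<and> 1 \<le> w \<and> w \<le> real n / 10 \<and> b = bfun (n + 1) w \<and> 0 \<le> \<xi> \<and> \<xi> \<le> 1 \<longrightarrow>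
       (\<forall>h::nat. w powr (3/2) \<le> real h \<and> h \<le> n \<longrightarrow>
          \<bar>fdens h (1 + w - b - \<xi>) - fdens h (1 - w - \<xi>)\<bar>
            \<le> C * (w / real h + w ^ 3 / (real h)\<^sup>2) * fdens h (1 - w)) \<and>
       (2 * sqrt (real n) \<le> w \<longrightarrow>
          (\<forall>k::nat. 1 \<le> k \<and> real k \<le> real n - 3 * w \<longrightarrow>
             (\<forall>v \<in> {fdens (n + 1 - k) (1 + w - b - \<xi>), fdens (n + 1 - k) (1 - w - \<xi>)}.
                \<exists>(\<theta>s::nat \<Rightarrow> real) (\<theta>::real).
                  (\<forall>j \<in> {n - k..n}. \<bar>\<theta>s j\<bar> \<le> 1) \<and> \<bar>\<theta>\<bar> \<le> 1 \<and>
                  v = fdens (n + 1) (1 - w) *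
                      exp ((\<Sum>j = n - k..n. 1 / (2 * real j) * (1 - w\<^sup>2 / real j)
                                 + \<theta>s j * C * w ^ 3 / (real j) ^ 3)
                           + \<theta> * C * w / real n)))))"
proof -
  have c0: "exp (200::real) > 0" by simp
  have c40: "40 \<le> exp (200::real)" using exp_ge_add_one_self[of "200::real"] by linarith
  have "\<forall>(n::nat) (w::real) (b::real) (\<xi>::real).
       n \<ge> 100 \<and> 1 \<le> w \<and> w \<le> real n / 10 \<and> b = bfun (n + 1) w \<and> 0 \<le> \<xi> \<and> \<xi> \<le> 1 \<longrightarrow>
       (\<forall>h::nat. w powr (3/2) \<le> real h \<and> h \<le> n \<longrightarrow>
          \<bar>fdens h (1 + w - b - \<xi>) - fdens h (1 - w - \<xi>)\<bar>
            \<le> exp 200 * (w / real h + w ^ 3 / (real h)\<^sup>2) * fdens h (1 - w)) \<and>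
       (2 * sqrt (real n) \<le> w \<longrightarrow>
          (\<forall>k::nat. 1 \<le> k \<and> real k \<le> real n - 3 * w \<longrightarrow>
             (\<forall>v \<in> {fdens (n + 1 - k) (1 + w - b - \<xi>), fdens (n + 1 - k) (1 - w - \<xi>)}.
                \<exists>(\<theta>s::nat \<Rightarrow> real) (\<theta>::real).
                  (\<forall>j \<in> {n - k..n}. \<bar>\<theta>s j\<bar> \<le> 1) \<and> \<bar>\<theta>\<bar> \<le> 1 \<and>
                  v = fdens (n + 1) (1 - w) *
                      exp ((\<Sum>j = n - k..n. 1 / (2 * real j) * (1 - w\<^sup>2 / real j)
                                 + \<theta>s j * exp 200 * w ^ 3 / (real j) ^ 3)
                           + \<theta> * exp 200 * w / real n))))"
  proof (intro allI impI)
    fix n :: nat and w b \<xi> :: real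
    assume H: "n \<ge> 100 \<and> 1 \<le> w \<and> w \<le> real n / 10 \<and> b = bfun (n + 1) w \<and> 0 \<le> \<xi> \<and> \<xi> \<le> 1"
    hence w1: "1 \<le> w" and wn: "w \<le> real n / 10" and bdef: "b = bfun (n + 1) w"
      and xi: "0 \<le> \<xi>" "\<xi> \<le> 1" by auto
    show "(\<forall>h::nat. w powr (3/2) \<le> real h \<and> h \<le> n \<longrightarrow>
          \<bar>fdens h (1 + w - b - \<xi>) - fdens h (1 - w - \<xi>)\<bar>
            \<le> exp 200 * (w / real h + w ^ 3 / (real h)\<^sup>2) * fdens h (1 - w)) \<and>
       (2 * sqrt (real n) \<le> w \<longrightarrow>
          (\<forall>k::nat. 1 \<le> k \<and> real k \<le> real n - 3 * w \<longrightarrow>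
             (\<forall>v \<in> {fdens (n + 1 - k) (1 + w - b - \<xi>), fdens (n + 1 - k) (1 - w - \<xi>)}.
                \<exists>(\<theta>s::nat \<Rightarrow> real) (\<theta>::real).
                  (\<forall>j \<in> {n - k..n}. \<bar>\<theta>s j\<bar> \<le> 1) \<and> \<bar>\<theta>\<bar> \<le> 1 \<and>
                  v = fdens (n + 1) (1 - w) *
                      exp ((\<Sum>j = n - k..n. 1 / (2 * real j) * (1 - w\<^sup>2 / real j)
                                 + \<theta>s j * exp 200 * w ^ 3 / (real j) ^ 3)
                           + \<theta> * exp 200 * w / real n))))"
    proof (intro conjI allI impI ballI)
      fix h :: nat assume "w powr (3/2) \<le> real h \<and> h \<le> n"
      thus "\<bar>fdens h (1 + w - b - \<xi>) - fdens h (1 - w - \<xi>)\<bar>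
            \<le> exp 200 * (w / real h + w ^ 3 / (real h)\<^sup>2) * fdens h (1 - w)"
        using part1[OF order_refl w1 wn bdef xi] by auto
    next
      fix k :: nat and v :: real
      assume ws: "2 * sqrt (real n) \<le> w" and kk: "1 \<le> k \<and> real k \<le> real n - 3 * w"
        and v: "v \<in> {fdens (n + 1 - k) (1 + w - b - \<xi>), fdens (n + 1 - k) (1 - w - \<xi>)}"
      show "\<exists>(\<theta>s::nat \<Rightarrow> real) (\<theta>::real).
                  (\<forall>j \<in> {n - k..n}. \<bar>\<theta>s j\<bar> \<le> 1) \<and> \<bar>\<theta>\<bar> \<le> 1 \<and>
                  v = fdens (n + 1) (1 - w) *
                      exp ((\<Sum>j = n - k..n. 1 / (2 * real j) * (1 - w\<^sup>2 / real j)
                                 + \<theta>s j * exp 200 * w ^ 3 / (real j) ^ 3)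
                           + \<theta> * exp 200 * w / real n)"
        by (rule part2[OF c40 w1 wn bdef xi ws _ v]) (use kk in auto)
    qed
  qed
  with c0 show ?thesis by blast
qed

end
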